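(* Let $(G,\tau,\partial)$ be a Polish topometric group. Then for every $\tau$-open $U\subseteq G$ and every $\varepsilon>0$, $(U)_\varepsilon=(1)_\varepsilon\cdot U$ and this set is $\tau$-open in $G$.
   Context: A Polish topometric group is a triple $(G,\tau,\partial)$ with $(G,\tau)$ a Polish group, $\partial$ a bi-invariant metric whose topology refines $\tau$ and which is $\tau$-lower semi-continuous. For $A\subseteq G$, $(A)_\varepsilon=\{g\colon\partial(g,A)<\varepsilon\}$, and $(1)_\varepsilon=(\{1_G\})_\varepsilon$. *)

theory Defs
  imports "HOL-Analysis.Analysis" "HOL-Algebra.Coset"
begin

definition Polish_space_top :: "'a topology \<Rightarrow> bool" where
  "Polish_space_top X \<longleftrightarrow> completely_metrizable_space X \<and> separable_space X"

definition Polish_group :: "('a, 'b) monoid_scheme \<Rightarrow> 'a topology \<Rightarrow> bool" where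
  "Polish_group G T \<longleftrightarrow>
     group G \<and> topspace T = carrier G \<and> Polish_space_top T \<and>
     continuous_map (prod_topology T T) T (\<lambda>(x, y). x \<otimes>\<^bsub>G\<^esub> y) \<and>
     continuous_map T T (\<lambda>x. inv\<^bsub>G\<^esub> x)"

text \<open>Polish topometric group (G, T, d): d is a bi-invariant metric on the carrier
  whose topology refines T and which is T-lower semicontinuous (on T x T).\<close>
definition Polish_topometric_group ::
  "('a, 'b) monoid_scheme \<Rightarrow> 'a topology \<Rightarrow> ('a \<Rightarrow> 'a \<Rightarrow> real) \<Rightarrow> bool" where
  "Polish_topometric_group G T d \<longleftrightarrow>
     Polish_group G T \<and>
     Metric_space (carrier G) d \<and>
     (\<forall>g\<in>carrier G. \<forall>x\<in>carrier G. \<forall>y\<in>carrier G.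
        d (g \<otimes>\<^bsub>G\<^esub> x) (g \<otimes>\<^bsub>G\<^esub> y) = d x y \<and>
        d (x \<otimes>\<^bsub>G\<^esub> g) (y \<otimes>\<^bsub>G\<^esub> g) = d x y) \<and>
     (\<forall>U. openin T U \<longrightarrow> openin (Metric_space.mtopology (carrier G) d) U) \<and>
     (\<forall>a. openin (prod_topology T T) {p \<in> topspace (prod_topology T T). d (fst p) (snd p) > a})"

text \<open>Distance from a point to a set, as an extended real (infinite for the empty set).\<close>
definition setdist_tm :: "('a \<Rightarrow> 'a \<Rightarrow> real) \<Rightarrow> 'a \<Rightarrow> 'a set \<Rightarrow> ereal" where
  "setdist_tm d g A = (INF a\<in>A. ereal (d g a))"

definition tm_nbhd :: "('a, 'b) monoid_scheme \<Rightarrow> ('a \<Rightarrow> 'a \<Rightarrow> real) \<Rightarrow> 'a set \<Rightarrow> real \<Rightarrow> 'a set" where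
  "tm_nbhd G d A \<epsilon> = {g \<in> carrier G. setdist_tm d g A < ereal \<epsilon>}"

end

theory Submission
  imports Defs
begin

lemma inf_lt_iff_tm: "setdist_tm d g A < ereal e \<longleftrightarrow> (\<exists>a\<in>A. d g a < e)"
  unfolding setdist_tm_def by (simp add: INF_less_iff)

theorem lemma5p4:
  fixes G :: "('a, 'b) monoid_scheme" and T :: "'a topology" and d :: "'a \<Rightarrow> 'a \<Rightarrow> real"
  assumes "Polish_topometric_group G T d"
    and "openin T U"
    and "\<epsilon> > 0"
  shows "tm_nbhd G d U \<epsilon> = tm_nbhd G d {\<one>\<^bsub>G\<^esub>} \<epsilon> <#>\<^bsub>G\<^esub> U
         \<and> openin T (tm_nbhd G d U \<epsilon>)"
proof -
  have PG: "Polish_group G T" and inv: "\<And>g x y. g\<in>carrier G \<Longrightarrow> x\<in>carrier G \<Longrightarrow> y\<in>carrier G \<Longrightarrow>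
        d (g \<otimes>\<^bsub>G\<^esub> x) (g \<otimes>\<^bsub>G\<^esub> y) = d x y \<and>
        d (x \<otimes>\<^bsub>G\<^esub> g) (y \<otimes>\<^bsub>G\<^esub> g) = d x y"
    using assms(1) unfolding Polish_topometric_group_def by auto
  have grp: "group G" and top: "topspace T = carrier G"
    and mc: "continuous_map (prod_topology T T) T (\<lambda>(x, y). x \<otimes>\<^bsub>G\<^esub> y)"
    using PG unfolding Polish_group_def by auto
  interpret group G by (rule grp)
  have Uc: "U \<subseteq> carrier G" using openin_subset[OF assms(2)] top by simp
  define N where "N = tm_nbhd G d {\<one>\<^bsub>G\<^esub>} \<epsilon>"
  have N: "N = {h \<in> carrier G. d h \<one>\<^bsub>G\<^esub> < \<epsilon>}"
    unfolding N_def tm_nbhd_def by (simp add: inf_lt_iff_tm)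
  have eq: "tm_nbhd G d U \<epsilon> = N <#>\<^bsub>G\<^esub> U"
  proof
    show "tm_nbhd G d U \<epsilon> \<subseteq> N <#>\<^bsub>G\<^esub> U"
    proof
      fix g assume "g \<in> tm_nbhd G d U \<epsilon>"
      then obtain u where g: "g \<in> carrier G" and u: "u \<in> U" and du: "d g u < \<epsilon>"
        unfolding tm_nbhd_def by (auto simp: inf_lt_iff_tm)
      have uc: "u \<in> carrier G" using u Uc by auto
      define h where "h = g \<otimes>\<^bsub>G\<^esub> inv\<^bsub>G\<^esub> u"
      have hc: "h \<in> carrier G" using g uc h_def by simp
      have "d h \<one>\<^bsub>G\<^esub> = d (g \<otimes>\<^bsub>G\<^esub> inv\<^bsub>G\<^esub> u) (u \<otimes>\<^bsub>G\<^esub> inv\<^bsub>G\<^esub> u)" using uc h_def by simp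
      also have "\<dots> = d g u" using inv[of "inv\<^bsub>G\<^esub> u" g u] g uc by simp
      finally have "h \<in> N" using N hc du by simp
      moreover have "g = h \<otimes>\<^bsub>G\<^esub> u" using g uc h_def by (simp add: m_assoc)
      ultimately show "g \<in> N <#>\<^bsub>G\<^esub> U" using u unfolding set_mult_def by auto
    qed
  next
    show "N <#>\<^bsub>G\<^esub> U \<subseteq> tm_nbhd G d U \<epsilon>"
    proof
      fix g assume "g \<in> N <#>\<^bsub>G\<^esub> U"
      then obtain h u where h: "h \<in> N" and u: "u \<in> U" and g: "g = h \<otimes>\<^bsub>G\<^esub> u"
        unfolding set_mult_def by auto
      have uc: "u \<in> carrier G" using u Uc by auto
      have hc: "h \<in> carrier G" and dh: "d h \<one>\<^bsub>G\<^esub> < \<epsilon>" using h N by auto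
      have "d (h \<otimes>\<^bsub>G\<^esub> u) u = d (h \<otimes>\<^bsub>G\<^esub> u) (\<one>\<^bsub>G\<^esub> \<otimes>\<^bsub>G\<^esub> u)" using uc by simp
      also have "\<dots> = d h \<one>\<^bsub>G\<^esub>" using inv[of u h "\<one>\<^bsub>G\<^esub>"] hc uc by simp
      finally have "d g u < \<epsilon>" using dh g by simp
      thus "g \<in> tm_nbhd G d U \<epsilon>" unfolding tm_nbhd_def using g hc uc u
        by (auto simp: inf_lt_iff_tm)
    qed
  qed
  have pre: "\<And>h. h \<in> carrier G \<Longrightarrow> openin T {x \<in> topspace T. inv\<^bsub>G\<^esub> h \<otimes>\<^bsub>G\<^esub> x \<in> U}"
  proof -
    fix h assume hc: "h \<in> carrier G"
    have "continuous_map T (prod_topology T T) (\<lambda>x. (inv\<^bsub>G\<^esub> h, x))"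
      using hc top by (simp add: continuous_map_pairwise o_def)
    hence "continuous_map T T ((\<lambda>(x, y). x \<otimes>\<^bsub>G\<^esub> y) \<circ> (\<lambda>x. (inv\<^bsub>G\<^esub> h, x)))"
      using mc continuous_map_compose by blast
    hence "continuous_map T T (\<lambda>x. inv\<^bsub>G\<^esub> h \<otimes>\<^bsub>G\<^esub> x)" by (simp add: o_def)
    thus "openin T {x \<in> topspace T. inv\<^bsub>G\<^esub> h \<otimes>\<^bsub>G\<^esub> x \<in> U}"
      using openin_continuous_map_preimage assms(2) by blast
  qed
  have u: "N <#>\<^bsub>G\<^esub> U = (\<Union>h\<in>N. {x \<in> topspace T. inv\<^bsub>G\<^esub> h \<otimes>\<^bsub>G\<^esub> x \<in> U})"
  proof (rule subset_antisym)
    show "N <#>\<^bsub>G\<^esub> U \<subseteq> (\<Union>h\<in>N. {x \<in> topspace T. inv\<^bsub>G\<^esub> h \<otimes>\<^bsub>G\<^esub> x \<in> U})"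
    proof
      fix x assume "x \<in> N <#>\<^bsub>G\<^esub> U"
      then obtain h u where h: "h \<in> N" and u: "u \<in> U" and g: "x = h \<otimes>\<^bsub>G\<^esub> u"
        unfolding set_mult_def by auto
      have uc: "u \<in> carrier G" using u Uc by auto
      have hc: "h \<in> carrier G" using h N by auto
      have "inv\<^bsub>G\<^esub> h \<otimes>\<^bsub>G\<^esub> x = u" using g hc uc by (simp add: m_assoc[symmetric])
      thus "x \<in> (\<Union>h\<in>N. {x \<in> topspace T. inv\<^bsub>G\<^esub> h \<otimes>\<^bsub>G\<^esub> x \<in> U})"
        using h u g hc uc top by (metis (no_types, lifting) UN_iff mem_Collect_eq m_closed)
    qed
  next
    show "(\<Union>h\<in>N. {x \<in> topspace T. inv\<^bsub>G\<^esub> h \<otimes>\<^bsub>G\<^esub> x \<in> U}) \<subseteq> N <#>\<^bsub>G\<^esub> U"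
    proof
      fix x assume "x \<in> (\<Union>h\<in>N. {x \<in> topspace T. inv\<^bsub>G\<^esub> h \<otimes>\<^bsub>G\<^esub> x \<in> U})"
      then obtain h where h: "h \<in> N" and x: "x \<in> carrier G" and xu: "inv\<^bsub>G\<^esub> h \<otimes>\<^bsub>G\<^esub> x \<in> U"
        using top by auto
      have hc: "h \<in> carrier G" using h N by auto
      have "x = h \<otimes>\<^bsub>G\<^esub> (inv\<^bsub>G\<^esub> h \<otimes>\<^bsub>G\<^esub> x)" using hc x by (simp add: m_assoc[symmetric])
      thus "x \<in> N <#>\<^bsub>G\<^esub> U" using h xu unfolding set_mult_def by blast
    qed
  qed
  have "openin T (N <#>\<^bsub>G\<^esub> U)" unfolding u
    by (rule openin_Union) (use pre N in auto)
  thus ?thesis using eq N_def by simp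
qed

end
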